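(* There is an absolute constant $c>0$ such that for every auction representation language $L$, every $m\ge1$, and every $H$ with $1<H<2^{m/400}$, there exists a distribution $\mathcal{D}$ over valuations in $[1,H]^m$ such that every auction of $L$-complexity at most $2^{m/400}$ has revenue on $\mathcal{D}$ at most $\frac{c}{\log H}\,\mathrm{OPT}(\mathcal{D})$.
   Context: Setting: a single unit-demand bidder and $m$ items. A valuation is a vector $v=(v(1),\dots,v(m))$. An auction (menu) is a set of entries $(x,p)$ with $x_j\ge0$, $\sum_j x_j\le1$ ($x_j$ the probability of receiving item $j$) and price $p\ge0$; the entry $(0,0)$ is always available. A bidder with valuation $v$ selects an entry maximizing $\sum_j x_jv(j)-p$ (ties broken in favor of the higher price) and pays its price. The revenue of an auction on $\mathcal{D}$ is the expected payment for $v\sim\mathcal{D}$. $\mathrm{OPT}(\mathcal{D})$ is the supremum of revenue on $\mathcal{D}$ over all auctions. An auction representation language is an arbitrary function $L$ from finite binary strings to auctions; the $L$-complexity of an auction is the length of the shortest binary string that $L$ maps to it (infinite if none). *)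

theory Defs
  imports "HOL-Probability.Probability" "HOL-Library.Extended_Nat"
begin

text \<open>Items are indexed by 0..m-1. A valuation is a function nat => real that is
  zero outside {0..<m}. A menu entry is a pair (x, p) with x an allocation vector
  (zero outside {0..<m}) and p a price.\<close>

type_synonym valuation = "nat \<Rightarrow> real"
type_synonym entry = "(nat \<Rightarrow> real) \<times> real"
type_synonym menu = "entry set"

definition valid_entry :: "nat \<Rightarrow> entry \<Rightarrow> bool" where
  "valid_entry m e \<longleftrightarrow> (\<forall>j. 0 \<le> fst e j) \<and> (\<forall>j\<ge>m. fst e j = 0)
     \<and> (\<Sum>j<m. fst e j) \<le> 1 \<and> 0 \<le> snd e"

definition null_entry :: entry where
  "null_entry = ((\<lambda>_. 0), 0)"

definition utility :: "nat \<Rightarrow> valuation \<Rightarrow> entry \<Rightarrow> real" where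
  "utility m v e = (\<Sum>j<m. fst e j * v j) - snd e"

definition vals_box :: "nat \<Rightarrow> real \<Rightarrow> valuation set" where
  "vals_box m H = {v. (\<forall>j<m. 1 \<le> v j \<and> v j \<le> H) \<and> (\<forall>j\<ge>m. v j = 0)}"

definition all_vals :: "nat \<Rightarrow> valuation set" where
  "all_vals m = {v. (\<forall>j. 0 \<le> v j) \<and> (\<forall>j\<ge>m. v j = 0)}"

definition is_choice :: "nat \<Rightarrow> menu \<Rightarrow> valuation \<Rightarrow> entry \<Rightarrow> bool" where
  "is_choice m M v e \<longleftrightarrow> e \<in> M \<and> (\<forall>e'\<in>M. utility m v e' \<le> utility m v e)
     \<and> (\<forall>e'\<in>M. utility m v e' = utility m v e \<longrightarrow> snd e' \<le> snd e)"

definition is_auction :: "nat \<Rightarrow> menu \<Rightarrow> bool" where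
  "is_auction m M \<longleftrightarrow> (\<forall>e\<in>M. valid_entry m e) \<and> null_entry \<in> M
     \<and> (\<forall>v\<in>all_vals m. \<exists>e. is_choice m M v e)"

definition payment :: "nat \<Rightarrow> menu \<Rightarrow> valuation \<Rightarrow> real" where
  "payment m M v = (THE p. \<exists>e. is_choice m M v e \<and> snd e = p)"

definition revenue :: "nat \<Rightarrow> menu \<Rightarrow> valuation pmf \<Rightarrow> real" where
  "revenue m M D = measure_pmf.expectation D (\<lambda>v. payment m M v)"

definition OPT :: "nat \<Rightarrow> valuation pmf \<Rightarrow> real" where
  "OPT m D = (SUP M \<in> {M. is_auction m M}. revenue m M D)"

text \<open>L-complexity: length of the shortest binary string mapped to A (infinite if none).\<close>
definition L_complexity :: "(bool list \<Rightarrow> 'a) \<Rightarrow> 'a \<Rightarrow> enat" where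
  "L_complexity L A = (INF s \<in> {s. L s = A}. enat (length s))"

end

theory Submission
  imports Defs "HOL-Library.FuncSet"
begin


lemma choice_price_unique:
  assumes "is_choice m M v e1" "is_choice m M v e2" shows "snd e1 = snd e2"
proof -
  have "utility m v e1 = utility m v e2" using assms unfolding is_choice_def by (meson order_antisym)
  then show ?thesis using assms unfolding is_choice_def by (metis order_antisym)
qed

lemma payment_eq: assumes "is_choice m M v e" shows "payment m M v = snd e"
  unfolding payment_def
proof (rule the_equality)
  show "\<exists>e'. is_choice m M v e' \<and> snd e' = snd e" using assms by blast
next
  fix p assume "\<exists>e'. is_choice m M v e' \<and> snd e' = p"
  then show "p = snd e" using choice_price_unique[OF _ assms] by blast
qed

lemma finite_choice:
  assumes "finite M" "M \<noteq> {}" shows "\<exists>e. is_choice m M v e"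
proof -
  define um where "um = Max (utility m v ` M)"
  define M1 where "M1 = {e\<in>M. utility m v e = um}"
  have "um \<in> utility m v ` M" unfolding um_def using assms by (intro Max_in) auto
  hence ne: "M1 \<noteq> {}" unfolding M1_def by auto
  have fin: "finite M1" unfolding M1_def using assms by auto
  have "Max (snd ` M1) \<in> snd ` M1" using ne fin by (intro Max_in) auto
  then obtain e where e: "e \<in> M1" "snd e = Max (snd ` M1)" by auto
  have "is_choice m M v e" unfolding is_choice_def
  proof (intro conjI ballI impI)
    show "e \<in> M" using e unfolding M1_def by auto
    fix e' assume "e' \<in> M"
    then show "utility m v e' \<le> utility m v e" using e assms unfolding M1_def um_def by auto
  next
    fix e' assume "e' \<in> M" "utility m v e' = utility m v e"
    hence "e' \<in> M1" using e unfolding M1_def by auto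
    then show "snd e' \<le> snd e" using e fin by auto
  qed
  then show ?thesis by blast
qed

lemma utility_null[simp]: "utility m v null_entry = 0"
  unfolding utility_def null_entry_def by simp

lemma payment_bounds:
  assumes A: "is_auction m A" and v: "v \<in> vals_box m H" and H: "0 \<le> H"
  shows "0 \<le> payment m A v" "payment m A v \<le> H"
proof -
  have va: "v \<in> all_vals m" using v unfolding vals_box_def all_vals_def
    by (auto, metis linorder_not_le order_trans zero_le_one order.refl)
  obtain e where e: "is_choice m A v e" using A va unfolding is_auction_def by blast
  have p: "payment m A v = snd e" by (rule payment_eq[OF e])
  have eA: "e \<in> A" using e unfolding is_choice_def by auto
  hence ve: "valid_entry m e" using A unfolding is_auction_def by auto
  show "0 \<le> payment m A v" using p ve unfolding valid_entry_def by simp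
  have "0 \<le> utility m v e" using e A unfolding is_choice_def is_auction_def
    by (metis utility_null)
  hence "snd e \<le> (\<Sum>j<m. fst e j * v j)" unfolding utility_def by simp
  also have "\<dots> \<le> (\<Sum>j<m. fst e j * H)"
    using ve v unfolding valid_entry_def vals_box_def by (intro sum_mono mult_left_mono) auto
  also have "\<dots> = (\<Sum>j<m. fst e j) * H" by (simp add: sum_distrib_right)
  also have "\<dots> \<le> 1 * H"
    using ve v H unfolding valid_entry_def vals_box_def
    by (intro mult_right_mono) auto
  finally show "payment m A v \<le> H" using p by simp
qed

lemma revenue_finite:
  assumes fin: "finite (set_pmf D)"
  shows "revenue m A D = (\<Sum>v\<in>set_pmf D. pmf D v * payment m A v)"
  unfolding revenue_def by (subst integral_measure_pmf[OF fin]) auto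

lemma revenue_bounds:
  assumes A: "is_auction m A" and fin: "finite (set_pmf D)" and sub: "set_pmf D \<subseteq> vals_box m H" and H: "0 \<le> H"
  shows "0 \<le> revenue m A D" "revenue m A D \<le> H"
proof -
  show "0 \<le> revenue m A D" unfolding revenue_finite[OF fin]
    using payment_bounds[OF A _ H] sub by (intro sum_nonneg) auto
  have "revenue m A D \<le> (\<Sum>v\<in>set_pmf D. pmf D v * H)" unfolding revenue_finite[OF fin]
    using payment_bounds[OF A _ H] sub by (intro sum_mono mult_left_mono) auto
  also have "\<dots> = H" using sum_pmf_eq_1[OF fin order.refl] by (simp add: sum_distrib_right[symmetric])
  finally show "revenue m A D \<le> H" .
qed

lemma null_auction: "is_auction m {null_entry}"
  unfolding is_auction_def using finite_choice[of "{null_entry}"]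
  by (auto simp: valid_entry_def null_entry_def)

lemma OPT_ge:
  assumes A: "is_auction m A" and fin: "finite (set_pmf D)" and sub: "set_pmf D \<subseteq> vals_box m H" and H: "0 \<le> H"
  shows "revenue m A D \<le> OPT m D" "0 \<le> OPT m D"
proof -
  have bdd: "bdd_above ((\<lambda>M. revenue m M D) ` {M. is_auction m M})"
    using revenue_bounds(2)[OF _ fin sub H] by (auto intro!: bdd_aboveI)
  show "revenue m A D \<le> OPT m D" unfolding OPT_def using A bdd by (intro cSUP_upper) auto
  then show "0 \<le> OPT m D" using revenue_bounds(1)[OF A fin sub H] by linarith
qed



definition vT :: "nat \<Rightarrow> nat set \<Rightarrow> real \<Rightarrow> valuation" where
  "vT m T w = (\<lambda>j. if j < m then (if j \<in> T then w else 1) else 0)"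

lemma vT_all_vals: "0 \<le> w \<Longrightarrow> vT m T w \<in> all_vals m"
  unfolding vT_def all_vals_def by auto

lemma util_vT:
  assumes "T \<subseteq> {..<m}"
  shows "utility m (vT m T w) e = (w - 1) * (\<Sum>j\<in>T. fst e j) + (\<Sum>j<m. fst e j) - snd e"
proof -
  have "(\<Sum>j<m. fst e j * vT m T w j) = (\<Sum>j<m. fst e j + (w - 1) * (if j \<in> T then fst e j else 0))"
    unfolding vT_def by (intro sum.cong) (auto simp: algebra_simps)
  also have "\<dots> = (\<Sum>j<m. fst e j) + (w - 1) * (\<Sum>j<m. if j \<in> T then fst e j else 0)"
    by (simp add: sum.distrib sum_distrib_left)
  also have "(\<Sum>j<m. if j \<in> T then fst e j else 0) = (\<Sum>j\<in>{..<m} \<inter> T. fst e j)"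
    by (simp add: sum.inter_restrict)
  also have "{..<m} \<inter> T = T" using assms by auto
  finally show ?thesis unfolding utility_def by simp
qed

lemma single_param:
  assumes A: "is_auction m A" and T: "T \<subseteq> {..<m}"
  defines "p \<equiv> (\<lambda>i::nat. payment m A (vT m T (2^i)))"
  shows "\<And>i. 0 \<le> p i" "\<And>i. p i \<le> 2^i" "(\<Sum>i\<in>{1..n}. p i / 2^i) \<le> 3"
proof -
  define ch where "ch = (\<lambda>i::nat. SOME e. is_choice m A (vT m T (2^i)) e)"
  have chc: "is_choice m A (vT m T (2^i)) (ch i)" for i
  proof -
    have "vT m T (2^i) \<in> all_vals m" by (rule vT_all_vals) simp
    then have "\<exists>e. is_choice m A (vT m T (2^i)) e" using A unfolding is_auction_def by blast
    then show ?thesis unfolding ch_def by (rule someI_ex)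
  qed
  have pe: "p i = snd (ch i)" for i unfolding p_def by (rule payment_eq[OF chc])
  have inA: "ch i \<in> A" for i using chc[of i] unfolding is_choice_def by auto
  have val: "valid_entry m (ch i)" for i using inA[of i] A unfolding is_auction_def by auto
  define a where "a = (\<lambda>i. \<Sum>j\<in>T. fst (ch i) j)"
  define t where "t = (\<lambda>i. \<Sum>j<m. fst (ch i) j)"
  define u where "u = (\<lambda>i. utility m (vT m T (2^i)) (ch i))"
  have a0: "0 \<le> a i" for i unfolding a_def using val[of i] unfolding valid_entry_def
    by (intro sum_nonneg) auto
  have at: "a i \<le> t i" for i unfolding a_def t_def using val[of i] T unfolding valid_entry_def
    by (intro sum_mono2) auto
  have t1: "t i \<le> 1" for i unfolding t_def using val[of i] unfolding valid_entry_def by auto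
  have u_eq: "u i = (2^i - 1) * a i + t i - p i" for i
    unfolding u_def a_def t_def pe using util_vT[OF T] by simp
  have u0: "0 \<le> u i" for i
    using chc[of i] A unfolding u_def is_choice_def is_auction_def by (metis utility_null)
  have ustep: "u (Suc i) \<ge> u i + 2^i * a i" for i
  proof -
    have "u (Suc i) \<ge> utility m (vT m T (2^Suc i)) (ch i)"
      using chc[of "Suc i"] inA[of i] unfolding u_def is_choice_def by auto
    also have "utility m (vT m T (2^Suc i)) (ch i) = (2^Suc i - 1) * a i + t i - p i"
      unfolding a_def t_def pe using util_vT[OF T] by simp
    finally show ?thesis using u_eq[of i] by (simp add: algebra_simps)
  qed
  have uub: "u i \<le> 2^i" for i
  proof -
    have "p i \<ge> 0" using val[of i] unfolding pe valid_entry_def by auto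
    moreover have "(2^i - 1) * a i \<le> (2^i - 1) * 1"
      using at[of i] t1[of i] by (intro mult_left_mono) auto
    ultimately show ?thesis using u_eq[of i] t1[of i] by simp
  qed
  show p0: "0 \<le> p i" for i using val[of i] unfolding pe valid_entry_def by auto
  show "p i \<le> 2^i" for i
  proof -
    have "(2^i - 1) * a i \<le> (2^i - 1) * 1"
      using at[of i] t1[of i] by (intro mult_left_mono) auto
    then show ?thesis using u_eq[of i] t1[of i] u0[of i] by simp
  qed
  have pstep: "p i / 2^i \<le> 2 * (u (Suc i) / 2^Suc i) - 2 * (u i / 2^i) + (1/2)^i" for i
  proof -
    have "p i \<le> u (Suc i) - 2 * u i + 1"
      using u_eq[of i] ustep[of i] at[of i] t1[of i] a0[of i] by (simp add: algebra_simps)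
    then have "p i / 2^i \<le> (u (Suc i) - 2 * u i + 1) / 2^i" by (simp add: divide_right_mono)
    also have "\<dots> = 2 * (u (Suc i) / 2^Suc i) - 2 * (u i / 2^i) + (1/2)^i"
      by (simp add: field_simps power_one_over)
    finally show ?thesis .
  qed
  have "(\<Sum>i\<in>{1..n}. p i / 2^i) \<le> 2 * (u (Suc n) / 2^Suc n) + 1 - (1/2)^n" for n
  proof (induction n)
    case 0
    then show ?case using u0[of 1] by simp
  next
    case (Suc n)
    have "(\<Sum>i\<in>{1..Suc n}. p i / 2^i) = (\<Sum>i\<in>{1..n}. p i / 2^i) + p (Suc n) / 2^Suc n"
      by simp
    also have "\<dots> \<le> 2 * (u (Suc n) / 2^Suc n) + 1 - (1/2)^n
        + (2 * (u (Suc (Suc n)) / 2^Suc (Suc n)) - 2 * (u (Suc n) / 2^Suc n) + (1/2)^Suc n)"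
      using Suc pstep[of "Suc n"] by linarith
    also have "\<dots> = 2 * (u (Suc (Suc n)) / 2^Suc (Suc n)) + 1 - (1/2)^Suc n" by simp
    finally show ?case .
  qed
  moreover have "u (Suc n) / 2^Suc n \<le> 1" using uub[of "Suc n"] by simp
  moreover have "0 \<le> ((1::real)/2)^n" by simp
  ultimately show "(\<Sum>i\<in>{1..n}. p i / 2^i) \<le> 3" by (smt (verit))
qed



definition Tb :: "nat \<Rightarrow> (nat \<Rightarrow> nat) \<Rightarrow> nat set" where
  "Tb b f = (\<lambda>x. x * 16 + f x) ` {..<b}"
definition agr :: "nat \<Rightarrow> (nat \<Rightarrow> nat) \<Rightarrow> (nat \<Rightarrow> nat) \<Rightarrow> nat" where
  "agr b f g = card {x\<in>{..<b}. f x = g x}"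
definition Ub :: "nat \<Rightarrow> (nat \<Rightarrow> nat) set" where
  "Ub b = PiE {..<b} (\<lambda>_. {..<16::nat})"

lemma enc_inj:
  fixes x y a c :: nat
  assumes "x * 16 + a = y * 16 + c" "a < 16" "c < 16"
  shows "x = y \<and> a = c"
proof -
  have "x = (x * 16 + a) div 16" using assms by auto
  also have "\<dots> = (y * 16 + c) div 16" using assms(1) by simp
  also have "\<dots> = y" using assms by auto
  finally have "x = y" .
  then show ?thesis using assms(1) by simp
qed

lemma Tb_sub: assumes "16 * b \<le> m" "f \<in> Ub b" shows "Tb b f \<subseteq> {..<m}"
proof
  fix j assume "j \<in> Tb b f"
  then obtain x where x: "x < b" "j = x * 16 + f x" unfolding Tb_def by auto
  have "f x < 16" using assms(2) x(1) unfolding Ub_def by (auto simp: PiE_iff)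
  then show "j \<in> {..<m}" using x assms(1) by simp
qed

lemma Tb_inter_card:
  assumes f: "f \<in> Ub b" and g: "g \<in> Ub b"
  shows "card (Tb b f \<inter> Tb b g) = agr b f g"
proof -
  have fl: "x < b \<Longrightarrow> f x < 16" for x using f unfolding Ub_def by (auto simp: PiE_iff)
  have gl: "x < b \<Longrightarrow> g x < 16" for x using g unfolding Ub_def by (auto simp: PiE_iff)
  have eq: "Tb b f \<inter> Tb b g = (\<lambda>x. x * 16 + f x) ` {x\<in>{..<b}. f x = g x}"
  proof
    show "Tb b f \<inter> Tb b g \<subseteq> (\<lambda>x. x * 16 + f x) ` {x\<in>{..<b}. f x = g x}"
    proof
      fix j assume "j \<in> Tb b f \<inter> Tb b g"
      then obtain x y where xy: "x < b" "y < b" "j = x * 16 + f x" "j = y * 16 + g y"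
        unfolding Tb_def by blast
      have "x * 16 + f x = y * 16 + g y" using xy by simp
      then have "x = y \<and> f x = g y" using enc_inj[of x "f x" y "g y"] fl[OF xy(1)] gl[OF xy(2)] by blast
      then have "x \<in> {x\<in>{..<b}. f x = g x}" using xy by simp
      then show "j \<in> (\<lambda>x. x * 16 + f x) ` {x\<in>{..<b}. f x = g x}" using xy(3) by (rule rev_image_eqI)
    qed
    show "(\<lambda>x. x * 16 + f x) ` {x\<in>{..<b}. f x = g x} \<subseteq> Tb b f \<inter> Tb b g"
    proof
      fix j assume "j \<in> (\<lambda>x. x * 16 + f x) ` {x\<in>{..<b}. f x = g x}"
      then obtain x where x: "x < b" "f x = g x" "j = x * 16 + f x" by blast
      have "j \<in> Tb b f" unfolding Tb_def using x by blast
      moreover have "j = x * 16 + g x" using x by simp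
      then have "j \<in> Tb b g" unfolding Tb_def using x(1) by blast
      ultimately show "j \<in> Tb b f \<inter> Tb b g" by blast
    qed
  qed
  have "inj_on (\<lambda>x. x * 16 + f x) {x\<in>{..<b}. f x = g x}"
  proof (rule inj_onI)
    fix x y assume "x \<in> {x\<in>{..<b}. f x = g x}" "y \<in> {x\<in>{..<b}. f x = g x}"
      "x * 16 + f x = y * 16 + f y"
    then show "x = y" using enc_inj[of x "f x" y "f y"] fl by blast
  qed
  then show ?thesis unfolding eq agr_def by (rule card_image)
qed

lemma agr_self: "agr b f f = b" unfolding agr_def by simp

lemma Tb_card: "f \<in> Ub b \<Longrightarrow> card (Tb b f) = b"
  using Tb_inter_card[of f b f] agr_self by simp

lemma agr_sym: "agr b f g = agr b g f" unfolding agr_def by (rule arg_cong[where f=card]) auto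

lemma card_Ub: "card (Ub b) = 16 ^ b"
  unfolding Ub_def by (simp add: card_PiE)

lemma finite_Ub: "finite (Ub b)" unfolding Ub_def by (simp add: finite_PiE)

lemma card_fix:
  assumes f: "f \<in> Ub b" and B: "B \<subseteq> {..<b}"
  shows "card {g\<in>Ub b. \<forall>x\<in>B. g x = f x} = 16 ^ (b - card B)"
proof -
  have eq: "{g\<in>Ub b. \<forall>x\<in>B. g x = f x} = PiE {..<b} (\<lambda>x. if x \<in> B then {f x} else {..<16})"
    using f B unfolding Ub_def by (auto simp: PiE_iff extensional_def split: if_splits)
  have "card (PiE {..<b} (\<lambda>x. if x \<in> B then {f x} else {..<16::nat}))
      = (\<Prod>x\<in>{..<b}. if x \<in> B then 1 else 16)"
    by (simp add: card_PiE if_distrib cong: if_cong)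
  also have "\<dots> = (\<Prod>x\<in>{..<b} - B. 16)"
    by (subst prod.If_cases) (auto simp: Diff_eq)
  also have "\<dots> = 16 ^ (b - card B)" using B by (simp add: card_Diff_subset finite_subset)
  finally show ?thesis using eq by simp
qed

lemma code_exists:
  assumes b1: "1 \<le> b"
  shows "\<exists>F \<subseteq> Ub b. 2^b \<le> card F \<and> (\<forall>f\<in>F. \<forall>g\<in>F. f \<noteq> g \<longrightarrow> 2 * agr b f g \<le> b)"
proof -
  define P where "P = (\<lambda>F. F \<subseteq> Ub b \<and> (\<forall>f\<in>F. \<forall>g\<in>F. f \<noteq> g \<longrightarrow> 2 * agr b f g \<le> b))"
  have h1: "P {}" by (simp add: P_def)
  have h2: "\<forall>G. P G \<longrightarrow> card G < card (Ub b) + 1"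
  proof (intro allI impI)
    fix G assume "P G"
    then have "G \<subseteq> Ub b" unfolding P_def by blast
    then show "card G < card (Ub b) + 1" using card_mono[OF finite_Ub] by (simp add: less_Suc_eq_le)
  qed
  have "\<exists>F. P F \<and> (\<forall>G. P G \<longrightarrow> card G \<le> card F)"
    by (rule ex_has_greatest_nat[OF h1 h2])
  then obtain F where PF: "P F" and maxF: "\<And>G. P G \<Longrightarrow> card G \<le> card F" by blast
  have FU: "F \<subseteq> Ub b" and finF: "finite F" using PF finite_Ub finite_subset unfolding P_def by auto
  define k where "k = b div 2 + 1"
  define Cl where "Cl = (\<lambda>f. {g\<in>Ub b. b < 2 * agr b f g})"
  have cover: "Ub b \<subseteq> (\<Union>f\<in>F. Cl f)"
  proof
    fix g assume g: "g \<in> Ub b"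
    show "g \<in> (\<Union>f\<in>F. Cl f)"
    proof (cases "g \<in> F")
      case True then show ?thesis using g b1 unfolding Cl_def by (auto simp: agr_self intro!: bexI[of _ g])
    next
      case False
      show ?thesis
      proof (rule ccontr)
        assume "\<not> ?thesis"
        then have "\<forall>f\<in>F. 2 * agr b f g \<le> b" using g unfolding Cl_def by auto
        then have "P (insert g F)" using PF g unfolding P_def by (auto simp: agr_sym)
        then have "card (insert g F) \<le> card F" by (rule maxF)
        then show False using False finF by simp
      qed
    qed
  qed
  have clcard: "card (Cl f) \<le> 2^b * 16^(b-k)" if f: "f \<in> Ub b" for f
  proof -
    define Bs where "Bs = {B. B \<subseteq> {..<b} \<and> card B = k}"
    have finBs: "finite Bs" unfolding Bs_def by (rule finite_subset[of _ "Pow {..<b}"]) auto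
    have "Cl f \<subseteq> (\<Union>B\<in>Bs. {g\<in>Ub b. \<forall>x\<in>B. g x = f x})"
    proof
      fix g assume g: "g \<in> Cl f"
      then have "k \<le> card {x\<in>{..<b}. f x = g x}" unfolding Cl_def agr_def k_def by auto
      then obtain B where B: "B \<subseteq> {x\<in>{..<b}. f x = g x}" "card B = k"
        by (rule obtain_subset_with_card_n)
      then show "g \<in> (\<Union>B\<in>Bs. {g\<in>Ub b. \<forall>x\<in>B. g x = f x})"
      proof -
        have "B \<in> Bs" using B unfolding Bs_def by auto
        moreover have "g \<in> {g\<in>Ub b. \<forall>x\<in>B. g x = f x}" using g B(1) unfolding Cl_def by auto
        ultimately show ?thesis by blast
      qed
    qed
    then have "card (Cl f) \<le> card (\<Union>B\<in>Bs. {g\<in>Ub b. \<forall>x\<in>B. g x = f x})"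
      by (intro card_mono) (auto intro: finite_subset[OF _ finite_Ub] simp: finBs)
    also have "\<dots> \<le> (\<Sum>B\<in>Bs. card {g\<in>Ub b. \<forall>x\<in>B. g x = f x})" by (rule card_UN_le[OF finBs])
    also have "\<dots> = (\<Sum>B\<in>Bs. 16^(b-k))"
      by (intro sum.cong refl) (use card_fix[OF f] in \<open>auto simp: Bs_def\<close>)
    also have "\<dots> = card Bs * 16^(b-k)" by simp
    also have "card Bs \<le> card (Pow {..<b})" unfolding Bs_def by (intro card_mono) auto
    then have "card Bs * 16^(b-k) \<le> 2^b * 16^(b-k)" by (simp add: card_Pow)
    finally show ?thesis .
  qed
  have "16^b \<le> card (\<Union>f\<in>F. Cl f)"
    unfolding card_Ub[symmetric] using cover
    by (intro card_mono) (auto simp: finF Cl_def intro: finite_subset[OF _ finite_Ub])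
  also have "\<dots> \<le> (\<Sum>f\<in>F. card (Cl f))" by (rule card_UN_le[OF finF])
  also have "\<dots> \<le> (\<Sum>f\<in>F. 2^b * 16^(b-k))" using clcard FU by (intro sum_mono) auto
  also have "\<dots> = card F * 2^b * 16^(b-k)" by simp
  finally have ineq: "16^b \<le> card F * 2^b * 16^(b-k)" .
  have kb: "k \<le> b" using b1 unfolding k_def by auto
  have e1: "(16::nat)^b = 16^k * 16^(b-k)" using kb by (metis le_add_diff_inverse power_add)
  have "16^k * 16^(b-k) \<le> (card F * 2^b) * 16^(b-k)" using ineq by (simp only: e1)
  then have i2: "16^k \<le> card F * 2^b" by (rule mult_right_le_imp_le) simp
  have i3: "(2::nat)^b * 2^b \<le> 16^k"
  proof -
    have "(2::nat)^b * 2^b = 2^(b + b)" by (rule power_add[symmetric])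
    also have "\<dots> \<le> 2^(4*k)" unfolding k_def by (intro power_increasing) auto
    also have "\<dots> = (2^4)^k" by (rule power_mult)
    also have "\<dots> = 16^k" by simp
    finally show ?thesis .
  qed
  have "2^b * 2^b \<le> card F * 2^b" using i2 i3 by (rule order.trans[rotated])
  then have "2^b \<le> card F" by (rule mult_right_le_imp_le) simp
  moreover have "F \<subseteq> Ub b" "\<forall>f\<in>F. \<forall>g\<in>F. f \<noteq> g \<longrightarrow> 2 * agr b f g \<le> b"
    using PF unfolding P_def by simp_all
  ultimately show ?thesis by (intro exI[of _ F] conjI)
qed



lemma exp_le_lin: "0 \<le> (y::real) \<Longrightarrow> y \<le> 1 \<Longrightarrow> exp y \<le> 1 + 2 * y"
proof -
  assume a: "0 \<le> y" "y \<le> 1"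
  have "exp y \<le> 1 + y + y\<^sup>2" by (rule exp_bound[OF a])
  moreover have "y\<^sup>2 \<le> y" using a mult_left_le[of y y] by (simp add: power2_eq_square)
  ultimately show ?thesis by linarith
qed

lemma counting:
  fixes F :: "'a set" and Lv :: "nat set" and Y :: "'a \<Rightarrow> nat \<Rightarrow> real"
  assumes finF: "finite F" and finL: "finite Lv" and n: "card Lv = n" and npos: "0 < n"
    and Y01: "\<And>f i. f \<in> F \<Longrightarrow> i \<in> Lv \<Longrightarrow> 0 \<le> Y f i \<and> Y f i \<le> 1"
    and Ysum: "\<And>f. f \<in> F \<Longrightarrow> (\<Sum>i\<in>Lv. Y f i) \<le> 3"
  shows "real (card {l\<in>PiE F (\<lambda>_. Lv). 7 * real (card F) / n < (\<Sum>f\<in>F. Y f (l f))})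
           \<le> real n ^ card F * exp (- real (card F) / n)"
proof -
  define K where "K = card F"
  define t where "t = 7 * real K / n"
  define P where "P = PiE F (\<lambda>_. Lv)"
  define Bad where "Bad = {l\<in>P. t < (\<Sum>f\<in>F. Y f (l f))}"
  have finP: "finite P" unfolding P_def using finF finL by (simp add: finite_PiE)
  have finB: "finite Bad" unfolding Bad_def using finP by simp
  have "real (card Bad) = (\<Sum>l\<in>Bad. 1)" by simp
  also have "\<dots> \<le> (\<Sum>l\<in>Bad. exp ((\<Sum>f\<in>F. Y f (l f)) - t))"
  proof (rule sum_mono)
    fix l assume "l \<in> Bad"
    then have "0 < (\<Sum>f\<in>F. Y f (l f)) - t" unfolding Bad_def by simp
    then show "1 \<le> exp ((\<Sum>f\<in>F. Y f (l f)) - t)" by simp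
  qed
  also have "\<dots> \<le> (\<Sum>l\<in>P. exp ((\<Sum>f\<in>F. Y f (l f)) - t))"
    by (rule sum_mono2[OF finP]) (auto simp: Bad_def)
  also have "\<dots> = (\<Sum>l\<in>P. exp (- t) * (\<Prod>f\<in>F. exp (Y f (l f))))"
    by (intro sum.cong refl) (simp add: exp_diff exp_sum[OF finF] exp_minus field_simps)
  also have "\<dots> = exp (- t) * (\<Sum>l\<in>P. (\<Prod>f\<in>F. exp (Y f (l f))))"
    by (simp add: sum_distrib_left)
  also have "(\<Sum>l\<in>P. (\<Prod>f\<in>F. exp (Y f (l f)))) = (\<Prod>f\<in>F. \<Sum>i\<in>Lv. exp (Y f i))"
    unfolding P_def by (rule prod_sum_PiE[symmetric]) (use finF finL in auto)
  also have "(\<Prod>f\<in>F. \<Sum>i\<in>Lv. exp (Y f i)) \<le> (\<Prod>f\<in>F. real n * exp (6 / n))"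
  proof (rule prod_mono)
    fix f assume f: "f \<in> F"
    have "(\<Sum>i\<in>Lv. exp (Y f i)) \<le> (\<Sum>i\<in>Lv. 1 + 2 * Y f i)"
      by (rule sum_mono) (use Y01[OF f] exp_le_lin in auto)
    also have "\<dots> = real n + 2 * (\<Sum>i\<in>Lv. Y f i)" using n by (simp add: sum.distrib sum_distrib_left)
    also have "\<dots> \<le> real n + 6" using Ysum[OF f] by simp
    also have "\<dots> = real n * (1 + 6 / n)" using npos by (simp add: field_simps)
    also have "\<dots> \<le> real n * exp (6 / n)" by (intro mult_left_mono) auto
    finally show "0 \<le> (\<Sum>i\<in>Lv. exp (Y f i)) \<and> (\<Sum>i\<in>Lv. exp (Y f i)) \<le> real n * exp (6 / n)"
      by (simp add: sum_nonneg)
  qed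
  also have "(\<Prod>f\<in>F. real n * exp (6 / n)) = real n ^ K * exp (6 * K / n)"
  proof -
    have "(\<Prod>f\<in>F. real n * exp (6 / n)) = (real n * exp (6 / n)) ^ K" by (simp add: K_def)
    also have "\<dots> = real n ^ K * exp (6 / n) ^ K" by (simp add: power_mult_distrib)
    also have "exp (6 / n) ^ K = exp (real K * (6 / n))" by (rule exp_of_nat_mult[symmetric])
    finally show ?thesis by (simp add: field_simps)
  qed
  finally have "real (card Bad) \<le> exp (- t) * (real n ^ K * exp (6 * K / n))"
    by (simp add: mult_left_mono)
  also have "\<dots> = real n ^ K * (exp (- t) * exp (6 * K / n))" by (simp add: field_simps)
  also have "exp (- t) * exp (6 * K / n) = exp (- real K / n)"
    unfolding t_def by (simp add: exp_add[symmetric] field_simps)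
  finally show ?thesis unfolding Bad_def P_def t_def K_def .
qed



definition ent :: "nat \<Rightarrow> (nat \<Rightarrow> nat) \<Rightarrow> real \<Rightarrow> entry" where
  "ent b f p = ((\<lambda>j. if j \<in> Tb b f then 1 / real b else 0), p)"

definition Mech :: "nat \<Rightarrow> (nat \<Rightarrow> nat) set \<Rightarrow> ((nat \<Rightarrow> nat) \<Rightarrow> nat) \<Rightarrow> menu" where
  "Mech b F l = insert null_entry ((\<lambda>f. ent b f (2^(l f) / 4)) ` F)"

lemma finite_Tb: "finite (Tb b f)" unfolding Tb_def by simp

lemma sum_if_const: "finite A \<Longrightarrow> (\<Sum>j\<in>A. if j \<in> B then c else 0) = c * real (card (A \<inter> B))"
  using sum.inter_restrict[of A "\<lambda>_. c" B] by (simp add: ac_simps)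

lemma util_ent:
  assumes mb: "16 * b \<le> m" and b1: "1 \<le> b" and f: "f \<in> Ub b" and g: "g \<in> Ub b"
  shows "utility m (vT m (Tb b f) w) (ent b g p) = (w - 1) * real (agr b f g) / real b + 1 - p"
proof -
  have Tf: "Tb b f \<subseteq> {..<m}" and Tg: "Tb b g \<subseteq> {..<m}" using Tb_sub[OF mb] f g by auto
  have s1: "(\<Sum>j\<in>Tb b f. fst (ent b g p) j) = real (agr b f g) / real b"
  proof -
    have "(\<Sum>j\<in>Tb b f. fst (ent b g p) j) = (\<Sum>j\<in>Tb b f \<inter> Tb b g. 1 / real b)"
      unfolding ent_def by (simp add: sum_if_const[OF finite_Tb])
    also have "\<dots> = real (card (Tb b f \<inter> Tb b g)) / real b" by simp
    finally show ?thesis using Tb_inter_card[OF f g] by simp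
  qed
  have s2: "(\<Sum>j<m. fst (ent b g p) j) = 1"
  proof -
    have "(\<Sum>j<m. fst (ent b g p) j) = (\<Sum>j\<in>{..<m} \<inter> Tb b g. 1 / real b)"
      unfolding ent_def by (simp add: sum_if_const)
    also have "{..<m} \<inter> Tb b g = Tb b g" using Tg by auto
    finally show ?thesis using Tb_card[OF g] b1 by simp
  qed
  show ?thesis unfolding util_vT[OF Tf] s1 s2 by (simp add: ent_def)
qed

lemma valid_ent:
  assumes mb: "16 * b \<le> m" and b1: "1 \<le> b" and g: "g \<in> Ub b" and p: "0 \<le> p"
  shows "valid_entry m (ent b g p)"
proof -
  have Tg: "Tb b g \<subseteq> {..<m}" using Tb_sub[OF mb] g by auto
  have s2: "(\<Sum>j<m. fst (ent b g p) j) = 1"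
  proof -
    have "(\<Sum>j<m. fst (ent b g p) j) = (\<Sum>j\<in>{..<m} \<inter> Tb b g. 1 / real b)"
      unfolding ent_def by (simp add: sum_if_const)
    also have "{..<m} \<inter> Tb b g = Tb b g" using Tg by auto
    finally show ?thesis using Tb_card[OF g] b1 by simp
  qed
  have "\<forall>j\<ge>m. fst (ent b g p) j = 0" using Tg unfolding ent_def by auto
  then show ?thesis unfolding valid_entry_def using s2 p by (simp add: ent_def)
qed

lemma Mech_auction:
  assumes mb: "16 * b \<le> m" and b1: "1 \<le> b" and FU: "F \<subseteq> Ub b" and finF: "finite F"
  shows "is_auction m (Mech b F l)"
  unfolding is_auction_def
proof (intro conjI ballI)
  fix e assume "e \<in> Mech b F l"
  then show "valid_entry m e" unfolding Mech_def
    using valid_ent[OF mb b1] FU by (auto simp: valid_entry_def null_entry_def)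
next
  show "null_entry \<in> Mech b F l" unfolding Mech_def by simp
next
  fix v show "\<exists>e. is_choice m (Mech b F l) v e"
    by (rule finite_choice) (auto simp: Mech_def finF)
qed

lemma Mech_pay:
  assumes mb: "16 * b \<le> m" and b1: "1 \<le> b" and FU: "F \<subseteq> Ub b" and finF: "finite F"
    and code: "\<forall>f\<in>F. \<forall>g\<in>F. f \<noteq> g \<longrightarrow> 2 * agr b f g \<le> b"
    and f: "f \<in> F" and lf: "1 \<le> l f"
  shows "payment m (Mech b F l) (vT m (Tb b f) (2^(l f))) = 2^(l f) / 4"
proof -
  define w :: real where "w = 2^(l f)"
  define e where "e = ent b f (2^(l f) / 4)"
  define v where "v = vT m (Tb b f) (2^(l f))"
  have w2: "2 \<le> w" unfolding w_def using lf
    by (metis power_increasing power_one_right numeral_le_iff one_le_numeral semiring_norm(68))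
  have fU: "f \<in> Ub b" using f FU by auto
  have ue: "utility m v e = 3 / 4 * w"
    unfolding v_def e_def util_ent[OF mb b1 fU fU] agr_self using b1 by (simp add: w_def field_simps)
  have strict: "utility m v e' < utility m v e \<or> e' = e" if e': "e' \<in> Mech b F l" for e'
  proof -
    consider "e' = null_entry" | g where "g \<in> F" "e' = ent b g (2^(l g) / 4)"
      using e' unfolding Mech_def by auto
    then show ?thesis
    proof cases
      case 1 then show ?thesis using ue w2 by simp
    next
      case (2 g)
      show ?thesis
      proof (cases "g = f")
        case True then show ?thesis using 2 unfolding e_def by simp
      next
        case False
        have gU: "g \<in> Ub b" using 2 FU by auto
        have ag: "2 * agr b f g \<le> b" using code f 2 False by auto
        have "real (agr b f g) / real b \<le> 1 / 2" using ag b1 by (simp add: field_simps)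
        then have "(w - 1) * (real (agr b f g) / real b) \<le> (w - 1) * (1 / 2)"
          using w2 by (intro mult_left_mono) auto
        moreover have "(0::real) < 2^(l g) / 4" by simp
        moreover have "utility m v e' = (w - 1) * (real (agr b f g) / real b) + 1 - 2^(l g) / 4"
          unfolding 2 v_def util_ent[OF mb b1 fU gU] w_def by simp
        ultimately have "utility m v e' < (w - 1) / 2 + 1" by linarith
        also have "\<dots> \<le> 3 / 4 * w" using w2 by (simp add: field_simps)
        finally show ?thesis using ue by simp
      qed
    qed
  qed
  have "is_choice m (Mech b F l) v e" unfolding is_choice_def
  proof (intro conjI ballI impI)
    show "e \<in> Mech b F l" unfolding Mech_def e_def using f by simp
  next
    fix e' assume "e' \<in> Mech b F l"
    then show "utility m v e' \<le> utility m v e" using strict by fastforce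
  next
    fix e' assume "e' \<in> Mech b F l" "utility m v e' = utility m v e"
    then show "snd e' \<le> snd e" using strict by fastforce
  qed
  then show ?thesis unfolding v_def by (simp add: payment_eq e_def ent_def)
qed



lemma complexity_witness:
  assumes "L_complexity L A \<le> enat N" shows "\<exists>s. L s = A \<and> length s \<le> N"
proof (rule ccontr)
  assume "\<not> ?thesis"
  then have "\<forall>s\<in>{s. L s = A}. enat (Suc N) \<le> enat (length s)" by auto
  then have "enat (Suc N) \<le> L_complexity L A" unfolding L_complexity_def by (simp add: le_INF_iff)
  then have "enat (Suc N) \<le> enat N" using assms by (rule order_trans)
  then show False by simp
qed

lemma sum_pow2_less: "(\<Sum>i\<le>N. (2::nat)^i) < 2^Suc N"
  by (induction N) auto

lemma S_finite_card:
  fixes L :: "bool list \<Rightarrow> menu" and m N :: nat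
  defines "S \<equiv> {A. is_auction m A \<and> L_complexity L A \<le> enat N}"
  shows "finite S" "card S \<le> 2^Suc N"
proof -
  define X where "X = {xs :: bool list. set xs \<subseteq> UNIV \<and> length xs \<le> N}"
  have finX: "finite X" unfolding X_def by (rule finite_lists_length_le) simp
  have sub: "S \<subseteq> L ` X"
  proof
    fix A assume "A \<in> S"
    then have "L_complexity L A \<le> enat N" unfolding S_def by simp
    then obtain s where "L s = A" "length s \<le> N" using complexity_witness[of L A N] by blast
    then show "A \<in> L ` X" unfolding X_def by blast
  qed
  show "finite S" using finite_subset[OF sub] finX by blast
  have "card S \<le> card (L ` X)" using sub finX by (intro card_mono) auto
  also have "\<dots> \<le> card X" by (rule card_image_le[OF finX])
  also have "\<dots> = (\<Sum>i\<le>N. 2^i)" unfolding X_def by (subst card_lists_length_le) auto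
  also have "\<dots> \<le> 2^Suc N" using sum_pow2_less[of N] by simp
  finally show "card S \<le> 2^Suc N" .
qed

lemma rev_formula:
  fixes V :: "'a \<Rightarrow> valuation" and c :: "'a \<Rightarrow> nat"
  assumes finF: "finite F" and ne: "F \<noteq> {}" and cpos: "\<And>f. f \<in> F \<Longrightarrow> 0 < c f"
  defines "PS \<equiv> Sigma F (\<lambda>f. {..<c f})"
  shows "revenue m A (map_pmf (\<lambda>p. V (fst p)) (pmf_of_set PS))
          = (\<Sum>f\<in>F. real (c f) * payment m A (V f)) / real (card PS)"
proof -
  have finPS: "finite PS" unfolding PS_def using finF by auto
  obtain f0 where f0: "f0 \<in> F" using ne by blast
  then have "(f0, 0) \<in> PS" unfolding PS_def using cpos[OF f0] by simp
  then have nePS: "PS \<noteq> {}" by blast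
  have "revenue m A (map_pmf (\<lambda>p. V (fst p)) (pmf_of_set PS))
      = (\<Sum>p\<in>PS. payment m A (V (fst p))) / real (card PS)"
    unfolding revenue_def by (simp add: integral_pmf_of_set[OF nePS finPS])
  also have "(\<Sum>p\<in>PS. payment m A (V (fst p))) = (\<Sum>(f,k)\<in>PS. payment m A (V f))"
    by (simp add: case_prod_unfold)
  also have "\<dots> = (\<Sum>f\<in>F. \<Sum>k<c f. payment m A (V f))"
    unfolding PS_def by (rule sum.Sigma[symmetric]) (use finF in auto)
  also have "\<dots> = (\<Sum>f\<in>F. real (c f) * payment m A (V f))" by simp
  finally show ?thesis .
qed



lemma trivial_case:
  fixes L :: "bool list \<Rightarrow> menu" and m :: nat and H :: real
  assumes H1: "1 < H" and H2: "H < 2"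
  shows "\<exists>D :: valuation pmf. set_pmf D \<subseteq> vals_box m H \<and>
          (\<forall>A. is_auction m A \<longrightarrow> L_complexity L A \<le> enat N \<longrightarrow>
               revenue m A D \<le> 56 / ln H * OPT m D)"
proof -
  define D where "D = return_pmf (vT m {} 1)"
  have sub: "set_pmf D \<subseteq> vals_box m H" unfolding D_def vT_def vals_box_def using H1 by auto
  have "revenue m A D \<le> 56 / ln H * OPT m D" if A: "is_auction m A" for A
  proof -
  have fin: "finite (set_pmf D)" unfolding D_def by simp
  have r: "revenue m A D \<le> OPT m D" and o: "0 \<le> OPT m D"
    using OPT_ge[OF A fin sub] H1 by auto
  have lnH0: "0 < ln H" using H1 by simp
  have "ln H < ln 2" using H1 H2 by simp
  then have "ln H < 1" using ln_2_less_1 by linarith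
  then have "1 \<le> 56 / ln H" using lnH0 by (simp add: field_simps)
  then have "1 * OPT m D \<le> 56 / ln H * OPT m D" using o by (intro mult_right_mono) auto
  then show "revenue m A D \<le> 56 / ln H * OPT m D" using r by simp
  qed
  then show ?thesis using sub by blast
qed


lemma main_case:
  fixes L :: "bool list \<Rightarrow> menu" and m :: nat and H :: real
  assumes H2: "2 \<le> H" and Hx: "H < 2 powr (real m / 400)"
  shows "\<exists>D :: valuation pmf. set_pmf D \<subseteq> vals_box m H \<and>
          (\<forall>A. is_auction m A \<longrightarrow> L_complexity L A \<le> enat (nat \<lfloor>2 powr (real m / 400)\<rfloor>) \<longrightarrow>
               revenue m A D \<le> 56 / ln H * OPT m D)"
proof -
  define x where "x = real m / 400"
  have "2 powr 1 < 2 powr x" using H2 Hx unfolding x_def by simp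
  then have x1: "1 < x" using powr_less_cancel_iff[of 2 1 x] by simp
  define b where "b = m div 16"
  have mb: "16 * b \<le> m" unfolding b_def by simp
  have mdec: "m = 16 * b + m mod 16" unfolding b_def by simp
  have r16: "real (m mod 16) < 16" by simp
  have "real m = real (16 * b + m mod 16)" using mdec by (rule arg_cong)
  then have rm: "real m = 16 * real b + real (m mod 16)" by simp
  have bge: "real m / 16 - 1 \<le> real b" using rm r16 by linarith
  have b1: "1 \<le> b"
  proof -
    have "real m / 16 - 1 > 1" using x1 unfolding x_def by simp
    then show ?thesis using bge by linarith
  qed
  define n where "n = nat \<lfloor>log 2 H\<rfloor>"
  have logH: "1 \<le> log 2 H" using H2 by (simp add: le_log_iff)
  have nle: "real n \<le> log 2 H" unfolding n_def using logH by linarith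
  have nlt: "log 2 H < real n + 1" unfolding n_def using logH by linarith
  have n1: "1 \<le> n" unfolding n_def using logH by linarith
  have npos: "0 < n" using n1 by simp
  have pow_n: "2 ^ n \<le> H"
  proof -
    have "(2::real) ^ n = 2 powr real n" by (simp add: powr_realpow)
    also have "\<dots> \<le> 2 powr (log 2 H)" using nle by simp
    also have "\<dots> = H" using H2 by simp
    finally show ?thesis .
  qed
  have lnH0: "0 < ln H" using H2 by simp
  have lnH: "ln H \<le> 2 * real n"
  proof -
    have "ln H = log 2 H * ln 2" unfolding log_def by simp
    also have "\<dots> \<le> (real n + 1) * ln 2" using nlt by (intro mult_right_mono) auto
    also have "\<dots> \<le> (real n + 1) * 1" using ln_2_less_1 by (intro mult_left_mono) auto
    finally show ?thesis using n1 by simp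
  qed
  obtain F where FU: "F \<subseteq> Ub b" and KF: "2^b \<le> card F"
    and code: "\<forall>f\<in>F. \<forall>g\<in>F. f \<noteq> g \<longrightarrow> 2 * agr b f g \<le> b"
    using code_exists[OF b1] by blast
  have finF: "finite F" using FU finite_Ub by (rule finite_subset)
  define K where "K = card F"
  have neF: "F \<noteq> {}" using KF by (intro notI) simp
  define N where "N = nat \<lfloor>2 powr x\<rfloor>"
  define S where "S = {A. is_auction m A \<and> L_complexity L A \<le> enat N}"
  have finS: "finite S" and cardS: "card S \<le> 2^Suc N"
    unfolding S_def by (rule S_finite_card)+
  define Lv where "Lv = {1..n}"
  have cardLv: "card Lv = n" unfolding Lv_def by simp
  define Y where "Y = (\<lambda>A f (i::nat). payment m A (vT m (Tb b f) (2^i)) / 2^i)"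
  have Tsub: "f \<in> F \<Longrightarrow> Tb b f \<subseteq> {..<m}" for f using Tb_sub[OF mb] FU by auto
  have SA: "A \<in> S \<Longrightarrow> is_auction m A" for A unfolding S_def by simp
  have Ybd: "0 \<le> Y A f i \<and> Y A f i \<le> 1" if "A \<in> S" "f \<in> F" for A f i
  proof -
    have "0 \<le> payment m A (vT m (Tb b f) (2^i))" "payment m A (vT m (Tb b f) (2^i)) \<le> 2^i"
      using single_param(1,2)[OF SA[OF that(1)] Tsub[OF that(2)]] by auto
    then show ?thesis unfolding Y_def by simp
  qed
  have Ysum: "(\<Sum>i\<in>Lv. Y A f i) \<le> 3" if "A \<in> S" "f \<in> F" for A f
    unfolding Y_def Lv_def using single_param(3)[OF SA[OF that(1)] Tsub[OF that(2)]] by simp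
  define P where "P = PiE F (\<lambda>_. Lv)"
  have finP: "finite P" unfolding P_def Lv_def using finF by (simp add: finite_PiE)
  have cardP: "card P = n ^ K" unfolding P_def K_def using finF cardLv by (simp add: card_PiE)
  define Bad where "Bad = (\<lambda>A. {l\<in>P. 7 * real K / n < (\<Sum>f\<in>F. Y A f (l f))})"
  have bad_card: "real (card (Bad A)) \<le> real n ^ K * exp (- real K / n)" if "A \<in> S" for A
    unfolding Bad_def P_def K_def
  proof (rule counting[OF finF _ cardLv npos])
    show "finite Lv" unfolding Lv_def by simp
    show "\<And>f i. f \<in> F \<Longrightarrow> i \<in> Lv \<Longrightarrow> 0 \<le> Y A f i \<and> Y A f i \<le> 1" using Ybd[OF that] by blast
    show "\<And>f. f \<in> F \<Longrightarrow> (\<Sum>i\<in>Lv. Y A f i) \<le> 3" using Ysum[OF that] by blast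
  qed
  have KN: "real n * (real N + 1) < real K"
  proof -
    have "real n < real ((2::nat) ^ n)" using less_exp[of n] by (simp only: of_nat_less_iff)
    then have "real n < 2 ^ n" by simp
    then have n_lt: "real n < 2 powr x" using pow_n Hx unfolding x_def by linarith
    have N_le: "real N \<le> 2 powr x" unfolding N_def by simp
    have p1: "1 \<le> 2 powr x" using x1 powr_le_cancel_iff[of 2 0 x] by simp
    have "real n * (real N + 1) < 2 powr x * (real N + 1)"
      using n_lt by (intro mult_strict_right_mono) auto
    also have "\<dots> \<le> 2 powr x * (2 * 2 powr x)"
      using N_le p1 by (intro mult_left_mono) auto
    also have "\<dots> = 2 powr (2 * x + 1)"
    proof -
      have e: "2 * x + 1 = x + x + 1" by linarith
      have "(2::real) powr (2 * x + 1) = 2 powr x * 2 powr x * 2 powr 1"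
        unfolding e by (simp only: powr_add)
      also have "(2::real) powr 1 = 2" by simp
      finally have h: "(2::real) powr (2 * x + 1) = 2 powr x * 2 powr x * 2" .
      show ?thesis unfolding h by (simp only: mult_ac)
    qed
    also have "\<dots> \<le> 2 powr (real b)"
      using bge x1 unfolding x_def by simp
    also have "\<dots> = 2 ^ b" by (simp add: powr_realpow)
    also have "\<dots> \<le> real K"
    proof -
      have "real ((2::nat) ^ b) \<le> real (card F)" using KF by (simp only: of_nat_le_iff)
      then show ?thesis unfolding K_def by simp
    qed
    finally show ?thesis .
  qed
  have small: "real (card S) * exp (- real K / n) < 1"
  proof -
    have "real K / n > real N + 1" using KN npos by (simp add: less_divide_eq mult.commute)
    then have e1: "exp (- real K / n) < exp (- (real N + 1))" by simp
    have "exp (- (real N + 1)) = exp (real (Suc N) * (-1))" by simp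
    also have "\<dots> = exp (-1) ^ Suc N" by (rule exp_of_nat_mult)
    also have "\<dots> \<le> (1/2) ^ Suc N"
    proof (rule power_mono)
      have "2 \<le> exp (1::real)" using exp_ge_add_one_self[of 1] by simp
      then show "exp (-1) \<le> (1::real) / 2" by (simp add: exp_minus field_simps)
    qed simp
    finally have e2: "exp (- real K / n) < (1/2) ^ Suc N" using e1 by linarith
    have "real (card S) * exp (- real K / n) \<le> 2 ^ Suc N * exp (- real K / n)"
    proof (rule mult_right_mono)
      have "real (card S) \<le> real ((2::nat) ^ Suc N)" using cardS by (simp only: of_nat_le_iff)
      then show "real (card S) \<le> 2 ^ Suc N" by simp
    qed simp
    also have "\<dots> < 2 ^ Suc N * (1/2) ^ Suc N" using e2 by (intro mult_strict_left_mono) auto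
    also have "\<dots> = 1" by (simp add: power_mult_distrib[symmetric])
    finally show ?thesis .
  qed
  have finBad: "finite (\<Union>A\<in>S. Bad A)" by (rule finite_subset[OF _ finP]) (auto simp: Bad_def)
  have "real (card (\<Union>A\<in>S. Bad A)) \<le> real (\<Sum>A\<in>S. card (Bad A))"
    using card_UN_le[OF finS, of Bad] by linarith
  also have "\<dots> = (\<Sum>A\<in>S. real (card (Bad A)))" by simp
  also have "\<dots> \<le> (\<Sum>A\<in>S. real n ^ K * exp (- real K / n))" by (intro sum_mono bad_card)
  also have "\<dots> = real n ^ K * (real (card S) * exp (- real K / n))" by simp
  also have "\<dots> < real n ^ K * 1" using small npos by (intro mult_strict_left_mono) auto
  also have "\<dots> = real (card P)" using cardP by simp
  finally have "card (\<Union>A\<in>S. Bad A) < card P" by linarith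
  then have "\<not> P \<subseteq> (\<Union>A\<in>S. Bad A)" using card_mono[OF finBad] by (meson not_le)
  then obtain l where lP: "l \<in> P" and lnot: "l \<notin> (\<Union>A\<in>S. Bad A)" by blast
  have good: "(\<Sum>f\<in>F. Y A f (l f)) \<le> 7 * real K / n" if "A \<in> S" for A
    using lnot lP that unfolding Bad_def by force
  have lr: "1 \<le> l f \<and> l f \<le> n" if "f \<in> F" for f
    using lP that unfolding P_def Lv_def by (auto simp: PiE_iff)
  define V where "V = (\<lambda>f. vT m (Tb b f) (2^(l f)))"
  define c where "c = (\<lambda>f. (2::nat)^(n - l f))"
  define PS where "PS = Sigma F (\<lambda>f. {..<c f})"
  define D where "D = map_pmf (\<lambda>p. V (fst p)) (pmf_of_set PS)"
  have cpos: "0 < c f" for f unfolding c_def by simp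
  have finPS: "finite PS" unfolding PS_def using finF by simp
  obtain f0 where f0: "f0 \<in> F" using neF by blast
  have "(f0, 0) \<in> PS" unfolding PS_def using cpos[of f0] f0 by simp
  then have nePS: "PS \<noteq> {}" by blast
  have setD: "set_pmf D = (\<lambda>p. V (fst p)) ` PS" unfolding D_def
    using nePS finPS by simp
  have finD: "finite (set_pmf D)" using setD finPS by simp
  have boxD: "set_pmf D \<subseteq> vals_box m H"
  proof
    fix v assume "v \<in> set_pmf D"
    then obtain p where p: "p \<in> PS" "v = V (fst p)" using setD by auto
    have fF: "fst p \<in> F" using p(1) unfolding PS_def by auto
    have l1: "1 \<le> l (fst p)" and ln: "l (fst p) \<le> n" using lr[OF fF] by auto
    have "(1::real) \<le> 2 ^ l (fst p)" by simp
    moreover have "(2::real) ^ l (fst p) \<le> 2 ^ n" using ln by (intro power_increasing) auto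
    then have "(2::real) ^ l (fst p) \<le> H" using pow_n by linarith
    ultimately show "v \<in> vals_box m H" unfolding p(2) V_def vT_def vals_box_def
      using pow_n H2 by auto
  qed
  define W where "W = real (card PS)"
  have Wpos: "0 < W" unfolding W_def using finPS nePS by (simp add: card_gt_0_iff)
  have revf: "revenue m A D = (\<Sum>f\<in>F. real (c f) * payment m A (V f)) / W" for A
    unfolding D_def W_def PS_def by (rule rev_formula[OF finF neF cpos])
  have termeq: "real (c f) * payment m A (V f) = 2 ^ n * Y A f (l f)" if "f \<in> F" for A f
  proof -
    have "(2::real) ^ n = 2 ^ (n - l f) * 2 ^ l f" using lr[OF that]
      by (simp add: power_add[symmetric])
    then show ?thesis unfolding c_def Y_def V_def by (simp add: field_simps)
  qed
  have revA: "revenue m A D = 2 ^ n / W * (\<Sum>f\<in>F. Y A f (l f))" for A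
    unfolding revf using termeq by (simp add: sum_distrib_left sum_divide_distrib)
  define M where "M = Mech b F l"
  have Mauc: "is_auction m M" unfolding M_def by (rule Mech_auction[OF mb b1 FU finF])
  have YM: "Y M f (l f) = 1 / 4" if "f \<in> F" for f
    unfolding Y_def M_def using Mech_pay[OF mb b1 FU finF code that] lr[OF that] by simp
  have revM: "revenue m M D = 2 ^ n / W * (real K / 4)"
  proof -
    have "(\<Sum>f\<in>F. Y M f (l f)) = (\<Sum>f\<in>F. 1 / 4)" by (rule sum.cong) (simp_all add: YM)
    also have "\<dots> = real (card F) / 4" by simp
    finally have hs: "(\<Sum>f\<in>F. Y M f (l f)) = real K / 4" unfolding K_def .
    show ?thesis unfolding revA hs ..
  qed
  have OPTM: "revenue m M D \<le> OPT m D" and OPT0: "0 \<le> OPT m D"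
    using OPT_ge[OF Mauc finD boxD] H2 by auto
  have "revenue m A D \<le> 56 / ln H * OPT m D" if A: "A \<in> S" for A
  proof -
    have "revenue m A D \<le> 2 ^ n / W * (7 * real K / n)"
      unfolding revA using good[OF A] Wpos by (intro mult_left_mono) auto
    also have "\<dots> = 28 / n * revenue m M D" unfolding revM by (simp add: field_simps)
    also have "\<dots> \<le> 28 / n * OPT m D" using OPTM by (intro mult_left_mono) auto
    also have "\<dots> \<le> 56 / ln H * OPT m D"
    proof (intro mult_right_mono OPT0)
      show "28 / real n \<le> 56 / ln H" using lnH lnH0 npos by (simp add: field_simps)
    qed
    finally show ?thesis .
  qed
  then show ?thesis using boxD unfolding S_def N_def x_def by blast
qed


theorem theorem2:
  "\<exists>c::real. c > 0 \<and>
    (\<forall>(L :: bool list \<Rightarrow> menu) (m::nat) (H::real).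
       m \<ge> 1 \<longrightarrow> 1 < H \<longrightarrow> H < 2 powr (real m / 400) \<longrightarrow>
       (\<exists>D :: valuation pmf. set_pmf D \<subseteq> vals_box m H \<and>
          (\<forall>A. is_auction m A \<longrightarrow>
               L_complexity L A \<le> enat (nat \<lfloor>2 powr (real m / 400)\<rfloor>) \<longrightarrow>
               revenue m A D \<le> c / ln H * OPT m D)))"
proof (rule exI[of _ 56], intro conjI allI impI)
  show "(0::real) < 56" by simp
  fix L :: "bool list \<Rightarrow> menu" and m :: nat and H :: real
  assume H1: "1 < H" and Hx: "H < 2 powr (real m / 400)"
  show "\<exists>D :: valuation pmf. set_pmf D \<subseteq> vals_box m H \<and>
          (\<forall>A. is_auction m A \<longrightarrow>
               L_complexity L A \<le> enat (nat \<lfloor>2 powr (real m / 400)\<rfloor>) \<longrightarrow>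
               revenue m A D \<le> 56 / ln H * OPT m D)"
  proof (cases "H < 2")
    case True
    then show ?thesis using trivial_case[OF H1 True, of m L] by blast
  next
    case False
    then show ?thesis using main_case[of H m L] Hx by simp
  qed
qed

end
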